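(* Let $m\ge1$ and let $Z_l=\{z_{j,l}\}_{j=1}^m$, $l=1,2$, be two $m$-point subsets of the unit circle with no common points, labeled as $z_{j,l}=e^{ix_{j,l}}$ with $0\le x_{1,l}<x_{2,l}<\dots<x_{m,l}<2\pi$. For $k=1,\dots,m$ put $$\omega_k=\frac{\prod_{j=1}^m\sin\frac{x_{k,1}-x_{j,2}}{2}}{\prod_{j=1,\,j\ne k}^{m}\sin\frac{x_{k,1}-x_{j,1}}{2}}\quad(\ne 0).$$ Then $Z_1$ and $Z_2$ interlace if and only if all the numbers $\omega_1,\dots,\omega_m$ have the same sign.
   Context: Two disjoint $m$-point sets $Z_1,Z_2$ on the unit circle interlace if, with the labeling above and (after possibly swapping the roles of the sets) $x_{1,1}<x_{1,2}$, one has $x_{1,1}<x_{1,2}<x_{2,1}<x_{2,2}<\dots<x_{m,1}<x_{m,2}$; equivalently, each open arc between cyclically consecutive points of $Z_1$ contains exactly one point of $Z_2$. *)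

theory Defs
  imports Complex_Main
begin

definition admissible_labeling :: "nat \<Rightarrow> (nat \<Rightarrow> real) \<Rightarrow> bool" where
  "admissible_labeling m x \<longleftrightarrow>
     (\<forall>j\<in>{1..m}. 0 \<le> x j \<and> x j < 2 * pi) \<and>
     (\<forall>j\<in>{1..m}. \<forall>k\<in>{1..m}. j < k \<longrightarrow> x j < x k)"

definition interlace_ord :: "nat \<Rightarrow> (nat \<Rightarrow> real) \<Rightarrow> (nat \<Rightarrow> real) \<Rightarrow> bool" where
  "interlace_ord m a b \<longleftrightarrow>
     (\<forall>j\<in>{1..m}. a j < b j) \<and> (\<forall>j\<in>{1..<m}. b j < a (Suc j))"

definition interlace :: "nat \<Rightarrow> (nat \<Rightarrow> real) \<Rightarrow> (nat \<Rightarrow> real) \<Rightarrow> bool" where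
  "interlace m x1 x2 \<longleftrightarrow> interlace_ord m x1 x2 \<or> interlace_ord m x2 x1"

definition omega :: "nat \<Rightarrow> (nat \<Rightarrow> real) \<Rightarrow> (nat \<Rightarrow> real) \<Rightarrow> nat \<Rightarrow> real" where
  "omega m x1 x2 k =
     (\<Prod>j=1..m. sin ((x1 k - x2 j) / 2)) / (\<Prod>j\<in>{1..m} - {k}. sin ((x1 k - x1 j) / 2))"

end

theory Submission
  imports Defs
begin

lemma sin_half_sign:
  fixes a b :: real
  assumes "0 \<le> a" "a < 2*pi" "0 \<le> b" "b < 2*pi"
  shows "sin ((a-b)/2) < 0 \<longleftrightarrow> a < b" and "sin ((a-b)/2) \<noteq> 0 \<longleftrightarrow> a \<noteq> b"
proof -
  have A: "sin ((a-b)/2) < 0" if "a < b"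
  proof -
    have "sin ((b-a)/2) > 0" using that assms by (intro sin_gt_zero) auto
    moreover have "(a-b)/2 = - ((b-a)/2)" by (metis minus_diff_eq minus_divide_left)
    ultimately show ?thesis by (metis neg_less_0_iff_less sin_minus)
  qed
  have B: "sin ((a-b)/2) > 0" if "b < a"
    using that assms by (intro sin_gt_zero) auto
  have C: "sin ((a-b)/2) = 0" if "a = b" using that by simp
  show "sin ((a-b)/2) < 0 \<longleftrightarrow> a < b" using A B C
    by (cases a b rule: linorder_cases) auto
  show "sin ((a-b)/2) \<noteq> 0 \<longleftrightarrow> a \<noteq> b" using A B C
    by (cases a b rule: linorder_cases) auto
qed

lemma sgn_prod_count:
  fixes f :: "'a \<Rightarrow> real"
  assumes "finite A" "\<forall>j\<in>A. f j \<noteq> 0"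
  shows "sgn (\<Prod>j\<in>A. f j) = (-1) ^ card {j\<in>A. f j < 0}"
  using assms
proof (induction A rule: finite_induct)
  case empty thus ?case by simp
next
  case (insert x F)
  have fin: "finite {j\<in>F. f j < 0}" using insert by simp
  have "sgn (\<Prod>j\<in>insert x F. f j) = sgn (f x) * sgn (\<Prod>j\<in>F. f j)"
    using insert by (simp add: sgn_mult)
  also have "\<dots> = sgn (f x) * (-1) ^ card {j\<in>F. f j < 0}" using insert by simp
  also have "\<dots> = (-1) ^ card {j\<in>insert x F. f j < 0}"
  proof (cases "f x < 0")
    case True
    hence "{j\<in>insert x F. f j < 0} = insert x {j\<in>F. f j < 0}" by auto
    hence "card {j\<in>insert x F. f j < 0} = Suc (card {j\<in>F. f j < 0})"
      using fin insert by simp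
    thus ?thesis using True by simp
  next
    case False
    hence "{j\<in>insert x F. f j < 0} = {j\<in>F. f j < 0}" by auto
    moreover have "f x > 0" using False insert by force
    ultimately show ?thesis by simp
  qed
  finally show ?case .
qed

definition cnt :: "nat \<Rightarrow> (nat \<Rightarrow> real) \<Rightarrow> (nat \<Rightarrow> real) \<Rightarrow> nat \<Rightarrow> nat" where
  "cnt m x1 x2 k = card {j\<in>{1..m}. x1 k < x2 j}"

lemma inc_le:
  fixes i j m :: nat
  assumes "\<forall>j\<in>{1..m}. \<forall>k\<in>{1..m}. j < k \<longrightarrow> x j < (x k::real)"
    "i \<in> {1..m}" "j \<in> {1..m}" "i \<le> j"
  shows "x i \<le> x j"
proof (cases "i = j")
  case False
  hence "i < j" using assms(4) by linarith
  hence "x i < x j" using assms(1,2,3) by blast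
  thus ?thesis by simp
qed simp

lemma cnt_le: "cnt m x1 x2 k \<le> m"
proof -
  have "cnt m x1 x2 k \<le> card {1..m}" unfolding cnt_def by (intro card_mono) auto
  thus ?thesis by simp
qed

lemma cnt_mono:
  assumes inc1: "\<forall>j\<in>{1..m}. \<forall>k\<in>{1..m}. j < k \<longrightarrow> x1 j < x1 k"
    and "k \<in> {1..m}" "k' \<in> {1..m}" "k \<le> k'"
  shows "cnt m x1 x2 k' \<le> cnt m x1 x2 k"
proof -
  have "x1 k \<le> x1 k'" using inc_le[OF inc1] assms by blast
  thus ?thesis unfolding cnt_def by (intro card_mono) auto
qed

locale setup2 =
  fixes m :: nat and x1 x2 :: "nat \<Rightarrow> real"
  assumes m1: "m \<ge> 1"
    and inc1: "\<forall>j\<in>{1..m}. \<forall>k\<in>{1..m}. j < k \<longrightarrow> x1 j < x1 k"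
    and inc2: "\<forall>j\<in>{1..m}. \<forall>k\<in>{1..m}. j < k \<longrightarrow> x2 j < x2 k"
    and dist: "\<forall>j\<in>{1..m}. \<forall>i\<in>{1..m}. x1 j \<noteq> x2 i"
begin

abbreviation "N \<equiv> cnt m x1 x2"

lemma a: assumes "interlace_ord m x1 x2" "k \<in> {1..m}" shows "N k = m - k + 1"
proof -
  have "{j\<in>{1..m}. x1 k < x2 j} = {k..m}"
  proof (intro set_eqI iffI)
    fix j assume j: "j \<in> {j\<in>{1..m}. x1 k < x2 j}"
    show "j \<in> {k..m}"
    proof (rule ccontr)
      assume "j \<notin> {k..m}"
      hence "j < k" using j by auto
      hence "x2 j < x1 (Suc j)" using assms j unfolding interlace_ord_def by auto
      moreover have "x1 (Suc j) \<le> x1 k" using inc_le[OF inc1, of "Suc j" k] \<open>j < k\<close> assms j by auto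
      ultimately show False using j by auto
    qed
  next
    fix j assume j: "j \<in> {k..m}"
    have "x1 k < x2 k" using assms unfolding interlace_ord_def by auto
    moreover have "x2 k \<le> x2 j" using inc_le[OF inc2, of k j] assms j by auto
    ultimately show "j \<in> {j\<in>{1..m}. x1 k < x2 j}" using j assms by auto
  qed
  thus ?thesis unfolding cnt_def using assms by (simp add: Suc_diff_le)
qed

lemma b: assumes "interlace_ord m x2 x1" "k \<in> {1..m}" shows "N k = m - k"
proof -
  have "{j\<in>{1..m}. x1 k < x2 j} = {Suc k..m}"
  proof (intro set_eqI iffI)
    fix j assume j: "j \<in> {j\<in>{1..m}. x1 k < x2 j}"
    show "j \<in> {Suc k..m}"
    proof (rule ccontr)
      assume "j \<notin> {Suc k..m}"
      hence "j \<le> k" using j by auto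
      hence "x2 j < x1 j" using assms j unfolding interlace_ord_def by auto
      moreover have "x1 j \<le> x1 k" using inc_le[OF inc1, of j k] \<open>j \<le> k\<close> assms j by auto
      ultimately show False using j by auto
    qed
  next
    fix j assume j: "j \<in> {Suc k..m}"
    have "x1 k < x2 (Suc k)" using assms j unfolding interlace_ord_def by auto
    moreover have "x2 (Suc k) \<le> x2 j" using inc_le[OF inc2, of "Suc k" j] assms j by auto
    ultimately show "j \<in> {j\<in>{1..m}. x1 k < x2 j}" using j assms by auto
  qed
  thus ?thesis unfolding cnt_def using assms by simp
qed

lemma c: assumes H: "\<forall>k\<in>{1..m}. N k = m - k + 1" shows "interlace_ord m x1 x2"
  unfolding interlace_ord_def
proof (intro conjI ballI)
  fix j assume j: "j \<in> {1..m}"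
  show "x1 j < x2 j"
  proof (rule ccontr)
    assume "\<not> x1 j < x2 j"
    hence lt: "x2 j < x1 j" using dist j by (metis linorder_neqE_linordered_idom)
    have "{i\<in>{1..m}. x1 j < x2 i} \<subseteq> {Suc j..m}"
    proof
      fix i assume i: "i \<in> {i\<in>{1..m}. x1 j < x2 i}"
      have "\<not> i \<le> j"
      proof
        assume "i \<le> j" hence "x2 i \<le> x2 j" using inc_le[OF inc2, of i j] i j by auto
        thus False using i lt by auto
      qed
      thus "i \<in> {Suc j..m}" using i by auto
    qed
    hence "N j \<le> card {Suc j..m}" unfolding cnt_def by (intro card_mono) auto
    thus False using H j by auto
  qed
next
  fix j assume j: "j \<in> {1..<m}"
  show "x2 j < x1 (Suc j)"
  proof (rule ccontr)
    assume "\<not> x2 j < x1 (Suc j)"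
    have "x1 (Suc j) \<noteq> x2 j" using dist j by (metis atLeastAtMost_iff atLeastLessThan_iff Suc_leI less_imp_le_nat le_SucI)
    hence lt: "x1 (Suc j) < x2 j" using \<open>\<not> x2 j < x1 (Suc j)\<close> by linarith
    have "{j..m} \<subseteq> {i\<in>{1..m}. x1 (Suc j) < x2 i}"
    proof
      fix i assume i: "i \<in> {j..m}"
      hence "x2 j \<le> x2 i" using inc_le[OF inc2, of j i] j by auto
      thus "i \<in> {i\<in>{1..m}. x1 (Suc j) < x2 i}" using i j lt by auto
    qed
    hence "card {j..m} \<le> N (Suc j)" unfolding cnt_def by (intro card_mono) auto
    thus False using H j by auto
  qed
qed

lemma d: assumes H: "\<forall>k\<in>{1..m}. N k = m - k" shows "interlace_ord m x2 x1"
  unfolding interlace_ord_def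
proof (intro conjI ballI)
  fix j assume j: "j \<in> {1..m}"
  show "x2 j < x1 j"
  proof (rule ccontr)
    assume "\<not> x2 j < x1 j"
    hence lt: "x1 j < x2 j" using dist j by (metis linorder_neqE_linordered_idom)
    have "{j..m} \<subseteq> {i\<in>{1..m}. x1 j < x2 i}"
    proof
      fix i assume i: "i \<in> {j..m}"
      hence "x2 j \<le> x2 i" using inc_le[OF inc2, of j i] j by auto
      thus "i \<in> {i\<in>{1..m}. x1 j < x2 i}" using i j lt by auto
    qed
    hence "card {j..m} \<le> N j" unfolding cnt_def by (intro card_mono) auto
    thus False using H j by auto
  qed
next
  fix j assume j: "j \<in> {1..<m}"
  show "x1 j < x2 (Suc j)"
  proof (rule ccontr)
    assume "\<not> x1 j < x2 (Suc j)"
    have "x1 j \<noteq> x2 (Suc j)" using dist j by (metis atLeastAtMost_iff atLeastLessThan_iff Suc_leI less_imp_le_nat le_SucI)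
    hence lt: "x2 (Suc j) < x1 j" using \<open>\<not> x1 j < x2 (Suc j)\<close> by linarith
    have "{i\<in>{1..m}. x1 j < x2 i} \<subseteq> {Suc (Suc j)..m}"
    proof
      fix i assume i: "i \<in> {i\<in>{1..m}. x1 j < x2 i}"
      have "\<not> i \<le> Suc j"
      proof
        assume "i \<le> Suc j" hence "x2 i \<le> x2 (Suc j)" using inc_le[OF inc2, of i "Suc j"] i j by auto
        thus False using i lt by auto
      qed
      thus "i \<in> {Suc (Suc j)..m}" using i by auto
    qed
    hence "N j \<le> card {Suc (Suc j)..m}" unfolding cnt_def by (intro card_mono) auto
    thus False using H j by auto
  qed
qed

lemma g:
  assumes P: "\<forall>k\<in>{1..m}. even (N k + (m - k)) \<longleftrightarrow> even (N m)"
  shows "(\<forall>k\<in>{1..m}. N k = m - k + 1) \<or> (\<forall>k\<in>{1..m}. N k = m - k)"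
proof -
  have gap: "N (Suc k) < N k" if k: "k \<in> {1..<m}" for k
  proof -
    have "N (Suc k) \<le> N k" using cnt_mono[OF inc1, of k "Suc k"] k by auto
    moreover have "N (Suc k) \<noteq> N k"
    proof
      assume e: "N (Suc k) = N k"
      have k1: "k \<in> {1..m}" "Suc k \<in> {1..m}" using k by auto
      have "even (N k + (m - k)) \<longleftrightarrow> even (N m)" using P k1(1) by blast
      moreover have "even (N (Suc k) + (m - Suc k)) \<longleftrightarrow> even (N m)" using P k1(2) by blast
      ultimately have "even (N k + (m - k)) \<longleftrightarrow> even (N (Suc k) + (m - Suc k))" by blast
      moreover have "m - k = Suc (m - Suc k)" using k by auto
      ultimately show False using e by (metis add_Suc_right even_Suc)
    qed
    ultimately show ?thesis by simp
  qed
  have up: "\<forall>k. 1 \<le> k \<longrightarrow> k \<le> m \<longrightarrow> N k + (k - 1) \<le> N 1"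
  proof (intro allI)
    fix k show "1 \<le> k \<longrightarrow> k \<le> m \<longrightarrow> N k + (k - 1) \<le> N 1"
    proof (induction k)
      case 0 then show ?case by simp
    next
      case (Suc k)
      show ?case
      proof (cases "k = 0")
        case True then show ?thesis by simp
      next
        case False
        show ?thesis
        proof (intro impI)
          assume "1 \<le> Suc k" "Suc k \<le> m"
          hence k: "k \<in> {1..<m}" using False by auto
          have "N (Suc k) < N k" by (rule gap[OF k])
          moreover have "N k + (k - 1) \<le> N 1" using Suc.IH k by auto
          ultimately show "N (Suc k) + (Suc k - 1) \<le> N 1" using False by linarith
        qed
      qed
    qed
  qed
  have down: "\<forall>d. d < m \<longrightarrow> N m + d \<le> N (m - d)"
  proof (intro allI)
    fix d show "d < m \<longrightarrow> N m + d \<le> N (m - d)"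
    proof (induction d)
      case 0 then show ?case by simp
    next
      case (Suc d)
      show ?case
      proof
        assume d: "Suc d < m"
        have k: "m - Suc d \<in> {1..<m}" using d by auto
        have "Suc (m - Suc d) = m - d" using d by linarith
        hence "N (m - d) < N (m - Suc d)" using gap[OF k] by simp
        moreover have "N m + d \<le> N (m - d)" using Suc.IH d by linarith
        ultimately show "N m + Suc d \<le> N (m - Suc d)" by linarith
      qed
    qed
  qed
  have bnd: "N m + (m - k) \<le> N k \<and> N k \<le> m - k + 1" if k: "k \<in> {1..m}" for k
  proof -
    have "m - k < m" using k by auto
    hence "N m + (m - k) \<le> N (m - (m - k))" using down by blast
    moreover have "m - (m - k) = k" using k by auto
    ultimately have "N m + (m - k) \<le> N k" by simp
    moreover have "N k + (k - 1) \<le> N 1" using up k by auto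
    moreover have "N 1 \<le> m" by (rule cnt_le)
    ultimately show ?thesis using k by linarith
  qed
  show ?thesis
  proof (cases "N m = 0")
    case False
    have "\<forall>k\<in>{1..m}. N k = m - k + 1"
    proof
      fix k assume k: "k \<in> {1..m}"
      show "N k = m - k + 1" using bnd[OF k] False by linarith
    qed
    thus ?thesis by blast
  next
    case True
    have "\<forall>k\<in>{1..m}. N k = m - k"
    proof
      fix k assume k: "k \<in> {1..m}"
      have "even (N k + (m - k))" using P k True by auto
      moreover have "N k = m - k \<or> N k = m - k + 1" using bnd[OF k] by auto
      ultimately show "N k = m - k" by presburger
    qed
    thus ?thesis by blast
  qed
qed

lemma comb:
  "interlace m x1 x2 \<longleftrightarrow> (\<forall>k\<in>{1..m}. even (N k + (m - k))) \<or> (\<forall>k\<in>{1..m}. odd (N k + (m - k)))"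
proof
  assume "interlace m x1 x2"
  hence "interlace_ord m x1 x2 \<or> interlace_ord m x2 x1" unfolding interlace_def .
  thus "(\<forall>k\<in>{1..m}. even (N k + (m - k))) \<or> (\<forall>k\<in>{1..m}. odd (N k + (m - k)))"
  proof
    assume h: "interlace_ord m x1 x2"
    have "\<forall>k\<in>{1..m}. odd (N k + (m - k))"
    proof
      fix k assume k: "k \<in> {1..m}"
      have "N k = m - k + 1" by (rule a[OF h k])
      thus "odd (N k + (m - k))" by simp
    qed
    thus ?thesis by blast
  next
    assume h: "interlace_ord m x2 x1"
    have "\<forall>k\<in>{1..m}. even (N k + (m - k))"
    proof
      fix k assume k: "k \<in> {1..m}"
      have "N k = m - k" by (rule b[OF h k])
      thus "even (N k + (m - k))" by simp
    qed
    thus ?thesis by blast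
  qed
next
  assume H: "(\<forall>k\<in>{1..m}. even (N k + (m - k))) \<or> (\<forall>k\<in>{1..m}. odd (N k + (m - k)))"
  have mm: "m \<in> {1..m}" using m1 by auto
  have "\<forall>k\<in>{1..m}. even (N k + (m - k)) \<longleftrightarrow> even (N m)"
  proof
    fix k assume k: "k \<in> {1..m}"
    from H show "even (N k + (m - k)) \<longleftrightarrow> even (N m)"
    proof
      assume h: "\<forall>k\<in>{1..m}. even (N k + (m - k))"
      have "even (N k + (m - k))" using h k by blast
      moreover have "even (N m + (m - m))" using h mm by blast
      ultimately show ?thesis by simp
    next
      assume h: "\<forall>k\<in>{1..m}. odd (N k + (m - k))"
      have "odd (N k + (m - k))" using h k by blast
      moreover have "odd (N m + (m - m))" using h mm by blast
      ultimately show ?thesis by simp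
    qed
  qed
  from g[OF this] show "interlace m x1 x2"
  proof
    assume "\<forall>k\<in>{1..m}. N k = m - k + 1"
    thus ?thesis unfolding interlace_def using c by blast
  next
    assume "\<forall>k\<in>{1..m}. N k = m - k"
    thus ?thesis unfolding interlace_def using d by blast
  qed
qed

end


lemma omega_sign:
  fixes m :: nat and x1 x2 :: "nat \<Rightarrow> real"
  assumes a1: "admissible_labeling m x1" and a2: "admissible_labeling m x2"
    and dist: "\<forall>j\<in>{1..m}. \<forall>i\<in>{1..m}. x1 j \<noteq> x2 i"
    and k: "k \<in> {1..m}"
  shows "sgn (omega m x1 x2 k) = (-1) ^ cnt m x1 x2 k / (-1) ^ (m - k)"
proof -
  have b1: "\<forall>j\<in>{1..m}. 0 \<le> x1 j \<and> x1 j < 2 * pi" and i1: "\<forall>j\<in>{1..m}. \<forall>k\<in>{1..m}. j < k \<longrightarrow> x1 j < x1 k"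
    using a1 unfolding admissible_labeling_def by auto
  have b2: "\<forall>j\<in>{1..m}. 0 \<le> x2 j \<and> x2 j < 2 * pi"
    using a2 unfolding admissible_labeling_def by auto
  have num: "sgn (\<Prod>j=1..m. sin ((x1 k - x2 j) / 2)) = (-1) ^ cnt m x1 x2 k"
  proof -
    have nz: "\<forall>j\<in>{1..m}. sin ((x1 k - x2 j) / 2) \<noteq> 0"
      using sin_half_sign(2)[of "x1 k" "x2 _"] b1 b2 dist k by blast
    have "{j\<in>{1..m}. sin ((x1 k - x2 j) / 2) < 0} = {j\<in>{1..m}. x1 k < x2 j}"
      using sin_half_sign(1)[of "x1 k" "x2 _"] b1 b2 k by blast
    thus ?thesis using sgn_prod_count[OF _ nz] unfolding cnt_def by simp
  qed
  have den: "sgn (\<Prod>j\<in>{1..m} - {k}. sin ((x1 k - x1 j) / 2)) = (-1) ^ (m - k)"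
  proof -
    have nz: "\<forall>j\<in>{1..m} - {k}. sin ((x1 k - x1 j) / 2) \<noteq> 0"
    proof
      fix j assume j: "j \<in> {1..m} - {k}"
      have "x1 k \<noteq> x1 j"
      proof (cases "j < k")
        case True thus ?thesis using i1 j k by force
      next
        case False hence "k < j" using j by auto
        thus ?thesis using i1 j k by force
      qed
      thus "sin ((x1 k - x1 j) / 2) \<noteq> 0" using sin_half_sign(2)[of "x1 k" "x1 j"] b1 j k by blast
    qed
    have "{j\<in>{1..m} - {k}. sin ((x1 k - x1 j) / 2) < 0} = {j\<in>{1..m} - {k}. x1 k < x1 j}"
      using sin_half_sign(1)[of "x1 k" "x1 _"] b1 k by blast
    also have "\<dots> = {Suc k..m}"
    proof (intro set_eqI iffI)
      fix j assume j: "j \<in> {j\<in>{1..m} - {k}. x1 k < x1 j}"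
      show "j \<in> {Suc k..m}"
      proof (rule ccontr)
        assume "j \<notin> {Suc k..m}"
        hence "j < k" using j by auto
        hence "x1 j < x1 k" using i1 j k by blast
        thus False using j by auto
      qed
    next
      fix j assume j: "j \<in> {Suc k..m}"
      hence "x1 k < x1 j" using i1 k by auto
      thus "j \<in> {j\<in>{1..m} - {k}. x1 k < x1 j}" using j k by auto
    qed
    finally show ?thesis using sgn_prod_count[OF _ nz] by simp
  qed
  show ?thesis unfolding omega_def sgn_divide num den ..
qed

lemma pow_div_sign:
  fixes a b :: nat
  shows "((-1::real) ^ a / (-1) ^ b = 1 \<longleftrightarrow> even (a + b)) \<and> ((-1::real) ^ a / (-1) ^ b = -1 \<longleftrightarrow> odd (a + b))"
  by (cases "even a"; cases "even b") auto

theorem proposition3: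
  fixes m :: nat and x1 x2 :: "nat \<Rightarrow> real"
  assumes "m \<ge> 1"
    and "admissible_labeling m x1" and "admissible_labeling m x2"
    and "\<forall>j\<in>{1..m}. \<forall>k\<in>{1..m}. exp (\<i> * complex_of_real (x1 j)) \<noteq> exp (\<i> * complex_of_real (x2 k))"
  shows "interlace m x1 x2 \<longleftrightarrow>
           ((\<forall>k\<in>{1..m}. omega m x1 x2 k > 0) \<or> (\<forall>k\<in>{1..m}. omega m x1 x2 k < 0))"
proof -
  have dist: "\<forall>j\<in>{1..m}. \<forall>i\<in>{1..m}. x1 j \<noteq> x2 i" using assms(4) by metis
  interpret setup2 m x1 x2
    using assms(1-3) dist unfolding setup2_def admissible_labeling_def by auto
  have pos: "omega m x1 x2 k > 0 \<longleftrightarrow> even (N k + (m - k))" if k: "k \<in> {1..m}" for k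
  proof -
    have "omega m x1 x2 k > 0 \<longleftrightarrow> sgn (omega m x1 x2 k) = 1" by (simp add: sgn_1_pos)
    thus ?thesis using omega_sign[OF assms(2,3) dist k] pow_div_sign by simp
  qed
  have neg: "omega m x1 x2 k < 0 \<longleftrightarrow> odd (N k + (m - k))" if k: "k \<in> {1..m}" for k
  proof -
    have "omega m x1 x2 k < 0 \<longleftrightarrow> sgn (omega m x1 x2 k) = -1" by (simp add: sgn_1_neg)
    thus ?thesis using omega_sign[OF assms(2,3) dist k] pow_div_sign by simp
  qed
  show ?thesis unfolding comb using pos neg by auto
qed

end
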